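(* Let $H,K$ be Hilbert spaces, $m\geq 2$, and let $x_{1},\dots,x_{m}\in B(H)$ and $y_{1},\dots,y_{m}\in B(K)$ be self-adjoint contractions, with $B=\sum_{i=1}^{m}x_{i}\otimes y_{i}$. For $i\neq j$ set \[ \phi_{ij}=\frac{1}{2}\Big(\|[x_{i},x_{j}]\|\,\|[y_{i},y_{j}]\|+\|\{x_{i},x_{j}\}\|\,\|\{y_{i},y_{j}\}\|\Big)\geq 0. \] Let $G$ be a simple undirected graph on $\{1,\dots,m\}$ with edge set $E(G)$, neighbor sets $N(i)$, degrees $\deg(i)=|N(i)|$, and minimum degree $\delta=\min_{i}\deg(i)\geq 1$. Assume that for every pair $i\neq j$ with $(i,j)\notin E(G)$, \[ \phi_{ij}\leq\frac{1}{\deg(i)}\sum_{k\in N(i)}\phi_{ik}+\frac{1}{\deg(j)}\sum_{k\in N(j)}\phi_{jk}. \] Then \[ \|B\|^{2}\leq m+C(G)\sum_{(i,j)\in E(G)}\phi_{ij},\qquad C(G)=\frac{2(m-1)}{\delta}-1, \] where the sum over $E(G)$ runs over each (unordered) edge once.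
   Context: $\|\cdot\|$ is the operator norm, $[a,b]=ab-ba$, $\{a,b\}=ab+ba$. A contraction is an operator of norm at most $1$. *)

theory Defs
  imports Complex_Main
begin

class chilbert = ab_group_add +
  fixes hscale :: "complex \<Rightarrow> 'a \<Rightarrow> 'a"
    and hinner :: "'a \<Rightarrow> 'a \<Rightarrow> complex"
  assumes hscale_add_right: "hscale c (x + y) = hscale c x + hscale c y"
    and hscale_add_left: "hscale (c + d) x = hscale c x + hscale d x"
    and hscale_hscale: "hscale c (hscale d x) = hscale (c * d) x"
    and hscale_one: "hscale 1 x = x"
    and hinner_conj: "hinner x y = cnj (hinner y x)"
    and hinner_add_right: "hinner x (y + z) = hinner x y + hinner x z"
    and hinner_scale_right: "hinner x (hscale c y) = c * hinner x y"
    and hinner_nonneg: "0 \<le> Re (hinner x x)"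
    and hinner_eq_zero: "hinner x x = 0 \<Longrightarrow> x = 0"
    and hcomplete:
      "(\<forall>e>0. \<exists>N. \<forall>p::nat\<ge>N. \<forall>q\<ge>N. sqrt (Re (hinner (X p - X q) (X p - X q))) < e)
        \<Longrightarrow> (\<exists>L. \<forall>e>0. \<exists>N. \<forall>n::nat\<ge>N. sqrt (Re (hinner (X n - L) (X n - L))) < e)"

definition hnorm :: "'a::chilbert \<Rightarrow> real" where
  "hnorm x = sqrt (Re (hinner x x))"

definition bounded_op :: "('a::chilbert \<Rightarrow> 'a) \<Rightarrow> bool" where
  "bounded_op T \<longleftrightarrow> (\<forall>x y. T (x + y) = T x + T y) \<and> (\<forall>c x. T (hscale c x) = hscale c (T x))
     \<and> (\<exists>C. \<forall>x. hnorm (T x) \<le> C * hnorm x)"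

definition opnorm :: "('a::chilbert \<Rightarrow> 'a) \<Rightarrow> real" where
  "opnorm T = Sup {hnorm (T x) | x. hnorm x \<le> 1}"

definition self_adjoint :: "('a::chilbert \<Rightarrow> 'a) \<Rightarrow> bool" where
  "self_adjoint T \<longleftrightarrow> (\<forall>x y. hinner (T x) y = hinner x (T y))"

definition contraction :: "('a::chilbert \<Rightarrow> 'a) \<Rightarrow> bool" where
  "contraction T \<longleftrightarrow> bounded_op T \<and> opnorm T \<le> 1"

definition commut :: "('a::chilbert \<Rightarrow> 'a) \<Rightarrow> ('a \<Rightarrow> 'a) \<Rightarrow> ('a \<Rightarrow> 'a)" where
  "commut S T = (\<lambda>v. S (T v) - T (S v))"

definition anticommut :: "('a::chilbert \<Rightarrow> 'a) \<Rightarrow> ('a \<Rightarrow> 'a) \<Rightarrow> ('a \<Rightarrow> 'a)" where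
  "anticommut S T = (\<lambda>v. S (T v) + T (S v))"

text \<open>The Hilbert tensor product H \<otimes> K is the completion of the algebraic tensor
product, on which \<langle>u\<otimes>v, u'\<otimes>v'\<rangle> = \<langle>u,u'\<rangle>\<langle>v,v'\<rangle>.  Since the algebraic tensor product
is dense and B is bounded, the operator norm of B equals the supremum of the norms
of B applied to finite sums \<xi> = \<Sigma>_{a<n} u_a \<otimes> v_a with norm at most 1.
We use this as the definition of the norm of B.\<close>

definition tensor_norm2 :: "(nat \<Rightarrow> 'a::chilbert) \<Rightarrow> (nat \<Rightarrow> 'b::chilbert) \<Rightarrow> nat \<Rightarrow> real" where
  "tensor_norm2 u v n = Re (\<Sum>a<n. \<Sum>b<n. hinner (u a) (u b) * hinner (v a) (v b))"

text \<open>Squared norm of (\<Sigma>_{i=1..m} x_i \<otimes> y_i)(\<Sigma>_{a<n} u_a \<otimes> v_a).\<close>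
definition tensor_op_image_norm2 ::
  "(nat \<Rightarrow> 'a::chilbert \<Rightarrow> 'a) \<Rightarrow> (nat \<Rightarrow> 'b::chilbert \<Rightarrow> 'b) \<Rightarrow> nat
     \<Rightarrow> (nat \<Rightarrow> 'a) \<Rightarrow> (nat \<Rightarrow> 'b) \<Rightarrow> nat \<Rightarrow> real" where
  "tensor_op_image_norm2 x y m u v n =
     Re (\<Sum>i\<in>{1..m}. \<Sum>j\<in>{1..m}. \<Sum>a<n. \<Sum>b<n.
           hinner (x i (u a)) (x j (u b)) * hinner (y i (v a)) (y j (v b)))"

definition tensor_sum_opnorm ::
  "(nat \<Rightarrow> 'a::chilbert \<Rightarrow> 'a) \<Rightarrow> (nat \<Rightarrow> 'b::chilbert \<Rightarrow> 'b) \<Rightarrow> nat \<Rightarrow> real" where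
  "tensor_sum_opnorm x y m =
     Sup {sqrt (tensor_op_image_norm2 x y m u v n) | u v n. tensor_norm2 u v n \<le> 1}"

definition phi :: "(nat \<Rightarrow> 'a::chilbert \<Rightarrow> 'a) \<Rightarrow> (nat \<Rightarrow> 'b::chilbert \<Rightarrow> 'b) \<Rightarrow> nat \<Rightarrow> nat \<Rightarrow> real" where
  "phi x y i j = (1/2) * (opnorm (commut (x i) (x j)) * opnorm (commut (y i) (y j))
                        + opnorm (anticommut (x i) (x j)) * opnorm (anticommut (y i) (y j)))"

definition simple_graph_on :: "nat \<Rightarrow> nat set set \<Rightarrow> bool" where
  "simple_graph_on m E \<longleftrightarrow> E \<subseteq> {{i, j} | i j. i \<in> {1..m} \<and> j \<in> {1..m} \<and> i \<noteq> j}"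

definition nbrs :: "nat set set \<Rightarrow> nat \<Rightarrow> nat set" where
  "nbrs E i = {j. {i, j} \<in> E}"

definition gdeg :: "nat set set \<Rightarrow> nat \<Rightarrow> nat" where
  "gdeg E i = card (nbrs E i)"

definition min_deg :: "nat \<Rightarrow> nat set set \<Rightarrow> nat" where
  "min_deg m E = Min (gdeg E ` {1..m})"

definition edge_pairs :: "nat \<Rightarrow> nat set set \<Rightarrow> (nat \<times> nat) set" where
  "edge_pairs m E = {(i, j). i \<in> {1..m} \<and> j \<in> {1..m} \<and> i < j \<and> {i, j} \<in> E}"

end

theory Submission
  imports Defs
begin



lemma hscale_zero_right[simp]: "hscale c (0::'a::chilbert) = 0"
proof -
  have "hscale c (0 + 0) = hscale c 0 + hscale c 0" by (rule hscale_add_right)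
  thus ?thesis by simp
qed

lemma hscale_minus_right: "hscale c (- x) = - hscale c x"
proof -
  have "hscale c (- x + x) = hscale c (- x) + hscale c x" by (rule hscale_add_right)
  thus ?thesis using eq_neg_iff_add_eq_0 by auto
qed

lemma hscale_diff_right: "hscale c (x - y) = hscale c x - hscale c y"
  unfolding diff_conv_add_uminus hscale_add_right hscale_minus_right ..

lemma hscale_zero_left[simp]: "hscale 0 (x::'a::chilbert) = 0"
proof -
  have "hscale (0 + 0) x = hscale 0 x + hscale 0 x" by (rule hscale_add_left)
  thus ?thesis by simp
qed

lemma hscale_sum_right: "hscale c (sum f A) = (\<Sum>a\<in>A. hscale c (f a))"
  by (induction A rule: infinite_finite_induct) (auto simp: hscale_add_right)

lemma hinner_zero_right[simp]: "hinner x (0::'a::chilbert) = 0"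
proof -
  have "hinner x (0 + 0) = hinner x 0 + hinner x 0" by (rule hinner_add_right)
  thus ?thesis by simp
qed

lemma hinner_minus_right: "hinner x (- y) = - hinner x y"
proof -
  have "hinner x (- y + y) = hinner x (- y) + hinner x y" by (rule hinner_add_right)
  thus ?thesis using eq_neg_iff_add_eq_0 by auto
qed

lemma hinner_diff_right: "hinner x (y - z) = hinner x y - hinner x z"
  unfolding diff_conv_add_uminus hinner_add_right hinner_minus_right by simp

lemma hinner_sum_right: "hinner x (sum f A) = (\<Sum>a\<in>A. hinner x (f a))"
  by (induction A rule: infinite_finite_induct) (auto simp: hinner_add_right)

lemma hinner_add_left: "hinner (x + y) z = hinner x z + hinner y z"
proof -
  have "hinner (x + y) z = cnj (hinner z (x + y))" by (rule hinner_conj)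
  also have "\<dots> = cnj (hinner z x) + cnj (hinner z y)" by (simp add: hinner_add_right)
  also have "\<dots> = hinner x z + hinner y z" by (simp flip: hinner_conj)
  finally show ?thesis .
qed

lemma hinner_scale_left: "hinner (hscale c x) y = cnj c * hinner x y"
proof -
  have "hinner (hscale c x) y = cnj (hinner y (hscale c x))" by (rule hinner_conj)
  also have "\<dots> = cnj c * cnj (hinner y x)" by (simp add: hinner_scale_right)
  also have "\<dots> = cnj c * hinner x y" by (simp flip: hinner_conj)
  finally show ?thesis .
qed

lemma hinner_zero_left[simp]: "hinner 0 (x::'a::chilbert) = 0"
  using hinner_conj[of 0 x] by simp

lemma hinner_minus_left: "hinner (- x) y = - hinner x y"
  using hinner_conj[of "- x" y] hinner_conj[of x y] by (simp add: hinner_minus_right)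

lemma hinner_diff_left: "hinner (x - y) z = hinner x z - hinner y z"
  unfolding diff_conv_add_uminus hinner_add_left hinner_minus_left by simp

lemma hinner_sum_left: "hinner (sum f A) y = (\<Sum>a\<in>A. hinner (f a) y)"
  by (induction A rule: infinite_finite_induct) (auto simp: hinner_add_left)

lemma hinner_self_Im: "Im (hinner x x) = 0"
proof -
  have "Im (hinner x x) = Im (cnj (hinner x x))" using hinner_conj[of x x] by simp
  thus ?thesis by simp
qed

lemma hinner_self_real: "hinner x x = complex_of_real (Re (hinner x x))"
  by (simp add: complex_eq_iff hinner_self_Im)

lemma hnorm_sq: "(hnorm x)^2 = Re (hinner x x)"
  by (simp add: hnorm_def hinner_nonneg)

lemma hnorm_nonneg: "0 \<le> hnorm x"
  by (simp add: hnorm_def hinner_nonneg)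

lemma hnorm_zero_iff: "hnorm x = 0 \<longleftrightarrow> x = 0"
proof
  assume "hnorm x = 0"
  hence "Re (hinner x x) = 0" unfolding hnorm_def using hinner_nonneg[of x] by simp
  hence "hinner x x = 0" by (subst hinner_self_real) simp
  thus "x = 0" by (rule hinner_eq_zero)
qed (simp add: hnorm_def)

lemma hnorm_scale: "hnorm (hscale c x) = cmod c * hnorm x"
proof -
  have "hinner (hscale c x) (hscale c x) = (cnj c * c) * hinner x x"
    by (simp add: hinner_scale_left hinner_scale_right)
  also have "cnj c * c = complex_of_real ((cmod c)^2)"
    by (simp only: complex_norm_square mult.commute)
  finally have "Re (hinner (hscale c x) (hscale c x)) = (cmod c)^2 * Re (hinner x x)"
    by simp
  thus ?thesis unfolding hnorm_def by (simp add: real_sqrt_mult)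
qed

lemma hnorm_minus: "hnorm (- x) = hnorm x"
  by (simp add: hnorm_def hinner_minus_left hinner_minus_right)



lemma bop_add: "bounded_op T \<Longrightarrow> T (x + y) = T x + T y"
  by (simp add: bounded_op_def)
lemma bop_scale: "bounded_op T \<Longrightarrow> T (hscale c x) = hscale c (T x)"
  by (simp add: bounded_op_def)
lemma bop_zero: "bounded_op (T::'a::chilbert\<Rightarrow>'a) \<Longrightarrow> T 0 = 0"
proof -
  assume b: "bounded_op T"
  have "T (0 + 0) = T 0 + T 0" by (rule bop_add[OF b])
  thus ?thesis by simp
qed
lemma bop_minus: "bounded_op (T::'a::chilbert\<Rightarrow>'a) \<Longrightarrow> T (- x) = - T x"
proof -
  assume b: "bounded_op T"
  have "T (- x + x) = T (- x) + T x" by (rule bop_add[OF b])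
  thus ?thesis using bop_zero[OF b] eq_neg_iff_add_eq_0 by auto
qed
lemma bop_diff: "bounded_op (T::'a::chilbert\<Rightarrow>'a) \<Longrightarrow> T (x - y) = T x - T y"
proof -
  assume b: "bounded_op T"
  show ?thesis using bop_add[OF b, of x "- y"] bop_minus[OF b, of y] by (simp only: diff_conv_add_uminus)
qed
lemma bop_sum: "bounded_op (T::'a::chilbert\<Rightarrow>'a) \<Longrightarrow> T (sum f A) = (\<Sum>a\<in>A. T (f a))"
  by (induction A rule: infinite_finite_induct) (auto simp: bop_add bop_zero)

lemma opnorm_facts:
  fixes T :: "'a::chilbert \<Rightarrow> 'a"
  assumes b: "bounded_op T"
  shows "0 \<le> opnorm T" "hnorm (T z) \<le> opnorm T * hnorm z"
proof -
  obtain C where C: "\<And>x. hnorm (T x) \<le> C * hnorm x" using b unfolding bounded_op_def by blast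
  define S where "S = {hnorm (T x) | x. hnorm x \<le> 1}"
  have bdd: "bdd_above S"
  proof
    fix s assume "s \<in> S"
    then obtain x where s: "s = hnorm (T x)" and x: "hnorm x \<le> 1" unfolding S_def by blast
    have "C * hnorm x \<le> max C 0 * hnorm x" by (simp add: hnorm_nonneg mult_right_mono)
    also have "\<dots> \<le> max C 0" using x hnorm_nonneg[of x] by (simp add: mult_left_le)
    finally show "s \<le> max C 0" using C[of x] s by simp
  qed
  have mem: "\<And>x. hnorm x \<le> 1 \<Longrightarrow> hnorm (T x) \<le> opnorm T"
    unfolding opnorm_def by (rule cSup_upper[OF _ bdd[unfolded S_def]]) blast
  show "0 \<le> opnorm T" using mem[of 0] by (simp add: bop_zero[OF b] hnorm_def)
  show "hnorm (T z) \<le> opnorm T * hnorm z"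
  proof (cases "z = 0")
    case True thus ?thesis by (simp add: bop_zero[OF b] hnorm_def)
  next
    case False
    define r where "r = hnorm z"
    have r: "r > 0" using False hnorm_zero_iff[of z] hnorm_nonneg[of z] unfolding r_def by auto
    define z' where "z' = hscale (complex_of_real (1/r)) z"
    have cm: "cmod (complex_of_real (1/r)) = 1/r" using r by (simp only: norm_of_real) simp
    have "hnorm z' = 1" unfolding z'_def hnorm_scale cm using r by (simp add: r_def)
    hence "hnorm (T z') \<le> opnorm T" by (intro mem) simp
    moreover have "hnorm (T z') = hnorm (T z) / r"
      unfolding z'_def bop_scale[OF b] hnorm_scale cm by simp
    ultimately show ?thesis using r unfolding r_def by (simp add: field_simps)
  qed
qed

lemma parallelogram_le:
  fixes a b :: "'a::chilbert"
  shows "(hnorm (a - b))^2 \<le> 2 * (hnorm a)^2 + 2 * (hnorm b)^2"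
        "(hnorm (a + b))^2 \<le> 2 * (hnorm a)^2 + 2 * (hnorm b)^2"
proof -
  have e: "hinner (a + b) (a + b) + hinner (a - b) (a - b) = 2 * hinner a a + 2 * hinner b b"
    by (simp add: hinner_add_left hinner_add_right hinner_diff_left hinner_diff_right algebra_simps)
  have "Re (hinner (a + b) (a + b)) + Re (hinner (a - b) (a - b)) = 2 * Re (hinner a a) + 2 * Re (hinner b b)"
    using arg_cong[OF e, of Re] by simp
  thus "(hnorm (a - b))^2 \<le> 2 * (hnorm a)^2 + 2 * (hnorm b)^2"
       "(hnorm (a + b))^2 \<le> 2 * (hnorm a)^2 + 2 * (hnorm b)^2"
    using hinner_nonneg[of "a+b"] hinner_nonneg[of "a-b"] by (simp_all add: hnorm_sq)
qed

lemma bounded_comb: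
  fixes S T :: "'a::chilbert \<Rightarrow> 'a"
  assumes S: "bounded_op S" and T: "bounded_op T"
  shows "bounded_op (commut S T)" "bounded_op (anticommut S T)"
proof -
  define A where "A = opnorm S * opnorm T"
  define B where "B = opnorm T * opnorm S"
  have A: "\<And>z. hnorm (S (T z)) \<le> A * hnorm z"
  proof -
    fix z
    have "hnorm (S (T z)) \<le> opnorm S * hnorm (T z)" by (rule opnorm_facts(2)[OF S])
    also have "\<dots> \<le> opnorm S * (opnorm T * hnorm z)"
      by (rule mult_left_mono[OF opnorm_facts(2)[OF T] opnorm_facts(1)[OF S]])
    finally show "hnorm (S (T z)) \<le> A * hnorm z" by (simp add: A_def)
  qed
  have B: "\<And>z. hnorm (T (S z)) \<le> B * hnorm z"
  proof -
    fix z
    have "hnorm (T (S z)) \<le> opnorm T * hnorm (S z)" by (rule opnorm_facts(2)[OF T])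
    also have "\<dots> \<le> opnorm T * (opnorm S * hnorm z)"
      by (rule mult_left_mono[OF opnorm_facts(2)[OF S] opnorm_facts(1)[OF T]])
    finally show "hnorm (T (S z)) \<le> B * hnorm z" by (simp add: B_def)
  qed
  have A0: "A \<ge> 0" "B \<ge> 0" using opnorm_facts(1)[OF S] opnorm_facts(1)[OF T] by (simp_all add: A_def B_def)
  define C where "C = sqrt (2 * A^2 + 2 * B^2)"
  have key: "hnorm w \<le> C * hnorm z"
    if w: "(hnorm w)^2 \<le> 2 * (hnorm (S (T z)))^2 + 2 * (hnorm (T (S z)))^2" for w z
  proof -
    have "(hnorm (S (T z)))^2 \<le> (A * hnorm z)^2"
      using A[of z] hnorm_nonneg by (intro power_mono) auto
    moreover have "(hnorm (T (S z)))^2 \<le> (B * hnorm z)^2"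
      using B[of z] hnorm_nonneg by (intro power_mono) auto
    ultimately have "(hnorm w)^2 \<le> (C * hnorm z)^2"
      using w unfolding C_def by (simp add: power_mult_distrib algebra_simps)
    thus ?thesis by (rule power2_le_imp_le) (simp add: C_def hnorm_nonneg)
  qed
  show "bounded_op (commut S T)"
    unfolding bounded_op_def commut_def
    using key[OF parallelogram_le(1)]
    by (auto intro!: exI[of _ C] simp: bop_add[OF S] bop_add[OF T] bop_scale[OF S] bop_scale[OF T] hscale_diff_right)
  show "bounded_op (anticommut S T)"
    unfolding bounded_op_def anticommut_def
    using key[OF parallelogram_le(2)]
    by (auto intro!: exI[of _ C] simp: bop_add[OF S] bop_add[OF T] bop_scale[OF S] bop_scale[OF T] hscale_add_right)
qed

lemma opnorm_neg_eq:
  fixes S T :: "'a::chilbert \<Rightarrow> 'a"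
  assumes "\<And>v. T v = - S v"
  shows "opnorm T = opnorm S"
  unfolding opnorm_def assms hnorm_minus ..



lemma schur_pos:
  fixes p :: "'a::chilbert \<Rightarrow> 'a \<Rightarrow> complex" and u :: "'i \<Rightarrow> 'a" and w :: "'i \<Rightarrow> 'b::chilbert"
  assumes padd: "\<And>x y z. p (x + y) z = p x z + p y z"
    and pscale: "\<And>c x z. p (hscale c x) z = cnj c * p x z"
    and padd2: "\<And>x y z. p x (y + z) = p x y + p x z"
    and pscale2: "\<And>c x z. p x (hscale c z) = c * p x z"
    and ppos: "\<And>z. 0 \<le> Re (p z z)"
    and fin: "finite I"
  shows "0 \<le> Re (\<Sum>a\<in>I. \<Sum>b\<in>I. p (u a) (u b) * hinner (w a) (w b))"
  using fin
proof (induction I arbitrary: w rule: finite_induct)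
  case empty
  then show ?case by simp
next
  case (insert c F)
  have p0: "p 0 y = 0" for y
  proof -
    have "p (0 + 0) y = p 0 y + p 0 y" by (rule padd)
    thus ?thesis by simp
  qed
  have p02: "p y 0 = 0" for y
  proof -
    have "p y (0 + 0) = p y 0 + p y 0" by (rule padd2)
    thus ?thesis by simp
  qed
  have psum: "p (sum f A) y = (\<Sum>a\<in>A. p (f a) y)" for f :: "'i \<Rightarrow> 'a" and A y
    by (induction A rule: infinite_finite_induct) (auto simp: padd p0)
  have psum2: "p y (sum f A) = (\<Sum>a\<in>A. p y (f a))" for f :: "'i \<Rightarrow> 'a" and A y
    by (induction A rule: infinite_finite_induct) (auto simp: padd2 p02)
  define z where "z = w c"
  define N where "N = hinner z z"
  define \<alpha> where "\<alpha> a = hinner z (w a) / N" for a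
  define w' where "w' a = w a - hscale (\<alpha> a) z" for a
  have w'c: "w' c = 0"
  proof (cases "z = 0")
    case True thus ?thesis by (simp add: w'_def z_def)
  next
    case False
    hence "N \<noteq> 0" unfolding N_def using hinner_eq_zero by auto
    hence "\<alpha> c = 1" by (simp add: \<alpha>_def N_def z_def)
    thus ?thesis by (simp add: w'_def z_def hscale_one)
  qed
  have decomp: "hinner (w a) (w b) = hinner (w' a) (w' b) + cnj (\<alpha> a) * \<alpha> b * N" for a b
  proof (cases "z = 0")
    case True thus ?thesis by (simp add: w'_def N_def)
  next
    case False
    hence N0: "N \<noteq> 0" unfolding N_def using hinner_eq_zero by auto
    have o1: "hinner z (w' b) = 0" for b
      unfolding w'_def hinner_diff_right hinner_scale_right using N0
      by (simp add: \<alpha>_def N_def)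
    have o2: "hinner (w' a) z = 0" for a
      using hinner_conj[of "w' a" z] o1[of a] by simp
    have wa: "w a = w' a + hscale (\<alpha> a) z" for a by (simp add: w'_def)
    show ?thesis
      unfolding wa[of a] wa[of b]
      by (simp add: hinner_add_left hinner_add_right hinner_scale_left hinner_scale_right o1 o2 N_def
          algebra_simps)
  qed
  define y where "y = (\<Sum>a\<in>insert c F. hscale (\<alpha> a) (u a))"
  have py: "p y y = (\<Sum>a\<in>insert c F. \<Sum>b\<in>insert c F. cnj (\<alpha> a) * \<alpha> b * p (u a) (u b))"
    unfolding y_def psum psum2 pscale pscale2
    by (simp add: sum_distrib_left mult.assoc) (rule trans[OF sum.swap], simp add: ac_simps)
  have red: "(\<Sum>a\<in>insert c F. \<Sum>b\<in>insert c F. p (u a) (u b) * hinner (w' a) (w' b))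
           = (\<Sum>a\<in>F. \<Sum>b\<in>F. p (u a) (u b) * hinner (w' a) (w' b))"
    using insert(1,2) by (simp add: w'c)
  have "(\<Sum>a\<in>insert c F. \<Sum>b\<in>insert c F. p (u a) (u b) * hinner (w a) (w b))
      = (\<Sum>a\<in>insert c F. \<Sum>b\<in>insert c F. p (u a) (u b) * hinner (w' a) (w' b))
        + N * p y y"
    unfolding decomp py
    by (simp add: distrib_left sum.distrib sum_distrib_left algebra_simps)
  also have "\<dots> = (\<Sum>a\<in>F. \<Sum>b\<in>F. p (u a) (u b) * hinner (w' a) (w' b)) + N * p y y"
    using red by simp
  finally have eq: "Re (\<Sum>a\<in>insert c F. \<Sum>b\<in>insert c F. p (u a) (u b) * hinner (w a) (w b))
      = Re (\<Sum>a\<in>F. \<Sum>b\<in>F. p (u a) (u b) * hinner (w' a) (w' b)) + Re N * Re (p y y)"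
    using hinner_self_Im[of z] by (simp add: N_def)
  have "0 \<le> Re N * Re (p y y)" using hinner_nonneg[of z] ppos[of y] by (simp add: N_def)
  with insert.IH[of w'] show ?case unfolding eq by linarith
qed



lemma tq_nonneg:
  fixes u :: "'i \<Rightarrow> 'a::chilbert" and v :: "'i \<Rightarrow> 'b::chilbert"
  assumes "finite I"
  shows "0 \<le> Re (\<Sum>a\<in>I. \<Sum>b\<in>I. hinner (u a) (u b) * hinner (v a) (v b))"
  by (rule schur_pos[OF hinner_add_left hinner_scale_left hinner_add_right hinner_scale_right hinner_nonneg assms])

lemma op_left:
  fixes u :: "'i \<Rightarrow> 'a::chilbert" and w :: "'i \<Rightarrow> 'b::chilbert" and S :: "'a \<Rightarrow> 'a"
  assumes S: "bounded_op S" and fin: "finite I"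
  shows "Re (\<Sum>a\<in>I. \<Sum>b\<in>I. hinner (S (u a)) (S (u b)) * hinner (w a) (w b))
        \<le> (opnorm S)^2 * Re (\<Sum>a\<in>I. \<Sum>b\<in>I. hinner (u a) (u b) * hinner (w a) (w b))"
proof -
  define r where "r = (opnorm S)^2"
  define p where "p x y = complex_of_real r * hinner x y - hinner (S x) (S y)" for x y
  have ppos: "0 \<le> Re (p z z)" for z
  proof -
    have "hnorm (S z) \<le> opnorm S * hnorm z" by (rule opnorm_facts(2)[OF S])
    hence "(hnorm (S z))^2 \<le> (opnorm S * hnorm z)^2" using hnorm_nonneg by (intro power_mono) auto
    thus ?thesis unfolding p_def r_def by (simp add: hnorm_sq power_mult_distrib)
  qed
  have "0 \<le> Re (\<Sum>a\<in>I. \<Sum>b\<in>I. p (u a) (u b) * hinner (w a) (w b))"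
    by (rule schur_pos[OF _ _ _ _ ppos fin])
       (simp_all add: p_def hinner_add_left hinner_add_right hinner_scale_left hinner_scale_right
          bop_add[OF S] bop_scale[OF S] algebra_simps)
  also have "(\<Sum>a\<in>I. \<Sum>b\<in>I. p (u a) (u b) * hinner (w a) (w b))
     = complex_of_real r * (\<Sum>a\<in>I. \<Sum>b\<in>I. hinner (u a) (u b) * hinner (w a) (w b))
       - (\<Sum>a\<in>I. \<Sum>b\<in>I. hinner (S (u a)) (S (u b)) * hinner (w a) (w b))"
    by (simp add: p_def sum_distrib_left sum_subtractf left_diff_distrib mult.assoc)
  finally show ?thesis by (simp add: r_def)
qed

lemma op_right:
  fixes u :: "'i \<Rightarrow> 'a::chilbert" and w :: "'i \<Rightarrow> 'b::chilbert" and T :: "'b \<Rightarrow> 'b"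
  assumes T: "bounded_op T" and fin: "finite I"
  shows "Re (\<Sum>a\<in>I. \<Sum>b\<in>I. hinner (u a) (u b) * hinner (T (w a)) (T (w b)))
        \<le> (opnorm T)^2 * Re (\<Sum>a\<in>I. \<Sum>b\<in>I. hinner (u a) (u b) * hinner (w a) (w b))"
  using op_left[OF T fin, of w u] by (simp add: mult.commute)

lemma sum_bool_prod:
  "sum f (I \<times> (UNIV::bool set)) = (\<Sum>a\<in>I. f (a, True) + f (a, False))"
proof -
  have "sum f (I \<times> (UNIV::bool set)) = (\<Sum>a\<in>I. \<Sum>\<beta>\<in>UNIV. f (a, \<beta>))"
    by (simp add: sum.cartesian_product)
  also have "\<dots> = (\<Sum>a\<in>I. f (a, True) + f (a, False))"
    by (simp add: UNIV_bool add.commute)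
  finally show ?thesis .
qed

lemma cross_bound:
  fixes u :: "'i \<Rightarrow> 'a::chilbert" and v :: "'i \<Rightarrow> 'b::chilbert"
    and S :: "'a \<Rightarrow> 'a" and T :: "'b \<Rightarrow> 'b"
  assumes S: "bounded_op S" and T: "bounded_op T" and fin: "finite I"
  shows "Re (\<Sum>a\<in>I. \<Sum>b\<in>I. hinner (u a) (S (u b)) * hinner (v a) (T (v b)))
        \<le> opnorm S * opnorm T * Re (\<Sum>a\<in>I. \<Sum>b\<in>I. hinner (u a) (u b) * hinner (v a) (v b))"
proof -
  define c where "c = opnorm S * opnorm T"
  have c0: "c \<ge> 0" using opnorm_facts(1)[OF S] opnorm_facts(1)[OF T] by (simp add: c_def)
  define QC where "QC = (\<Sum>a\<in>I. \<Sum>b\<in>I. hinner (u a) (u b) * hinner (v a) (v b))"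
  define M where "M = (\<Sum>a\<in>I. \<Sum>b\<in>I. hinner (u a) (S (u b)) * hinner (v a) (T (v b)))"
  define M' where "M' = (\<Sum>a\<in>I. \<Sum>b\<in>I. hinner (S (u a)) (u b) * hinner (T (v a)) (v b))"
  define PC where "PC = (\<Sum>a\<in>I. \<Sum>b\<in>I. hinner (S (u a)) (S (u b)) * hinner (T (v a)) (T (v b)))"
  have Q0: "0 \<le> Re QC" unfolding QC_def by (rule tq_nonneg[OF fin])
  have P: "Re PC \<le> c^2 * Re QC"
  proof -
    have "Re PC \<le> (opnorm S)^2 * Re (\<Sum>a\<in>I. \<Sum>b\<in>I. hinner (u a) (u b) * hinner (T (v a)) (T (v b)))"
      unfolding PC_def by (rule op_left[OF S fin])
    also have "\<dots> \<le> (opnorm S)^2 * ((opnorm T)^2 * Re QC)"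
      unfolding QC_def by (rule mult_left_mono[OF op_right[OF T fin]]) simp
    finally show ?thesis by (simp add: c_def power_mult_distrib)
  qed
  have M': "Re M' = Re M"
  proof -
    have "M' = cnj (\<Sum>b\<in>I. \<Sum>a\<in>I. hinner (u b) (S (u a)) * hinner (v b) (T (v a)))"
      unfolding M'_def by (simp add: hinner_conj[of "S (u _)"] hinner_conj[of "T (v _)"]) (rule sum.swap)
    also have "(\<Sum>b\<in>I. \<Sum>a\<in>I. hinner (u b) (S (u a)) * hinner (v b) (T (v a))) = M"
      unfolding M_def by (rule refl)
    finally show ?thesis by simp
  qed
  have amgm: "2 * s * Re M \<le> s^2 * Re QC + Re PC" for s :: real
  proof -
    define U where "U x = (if snd x then hscale (complex_of_real s) (u (fst x)) else - S (u (fst x)))" for x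
    define W where "W x = (if snd x then v (fst x) else T (v (fst x)))" for x
    have fin2: "finite (I \<times> (UNIV::bool set))" using fin by simp
    have "0 \<le> Re (\<Sum>x\<in>I \<times> (UNIV::bool set). \<Sum>y\<in>I \<times> (UNIV::bool set). hinner (U x) (U y) * hinner (W x) (W y))"
      by (rule tq_nonneg[OF fin2])
    also have "(\<Sum>x\<in>I \<times> (UNIV::bool set). \<Sum>y\<in>I \<times> (UNIV::bool set). hinner (U x) (U y) * hinner (W x) (W y))
       = complex_of_real (s^2) * QC - complex_of_real s * M - complex_of_real s * M' + PC"
      unfolding sum_bool_prod U_def W_def QC_def M_def M'_def PC_def
      by (simp add: hinner_scale_left hinner_scale_right hinner_minus_left hinner_minus_right
          sum.distrib sum_distrib_left sum_subtractf sum_negf power2_eq_square algebra_simps)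
    finally show ?thesis using M' by (simp add: power2_eq_square)
  qed
  show ?thesis
  proof (cases "c = 0")
    case False
    hence cp: "c > 0" using c0 by simp
    have "2 * c * Re M \<le> 2 * c * (c * Re QC)" using amgm[of c] P by (simp add: power2_eq_square algebra_simps)
    hence "Re M \<le> c * Re QC" using cp by simp
    thus ?thesis by (simp only: M_def QC_def c_def)
  next
    case True
    have "Re M \<le> 0"
    proof (rule ccontr)
      assume "\<not> Re M \<le> 0"
      hence m: "Re M > 0" by simp
      define s where "s = Re M / (Re QC + 1)"
      have s: "s > 0" using m Q0 by (simp add: s_def)
      have "2 * s * Re M \<le> s^2 * Re QC" using amgm[of s] P True by simp
      hence "2 * Re M \<le> s * Re QC" using s by (simp add: power2_eq_square)
      also have "s * Re QC < Re M" unfolding s_def using m Q0 by (simp add: field_simps)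
      finally show False using m by simp
    qed
    hence "Re M \<le> c * Re QC" using True by simp
    thus ?thesis by (simp only: M_def QC_def c_def)
  qed
qed



lemma sum_square_split:
  fixes f :: "nat \<Rightarrow> nat \<Rightarrow> 'c::comm_monoid_add"
  assumes fin: "finite A"
  shows "(\<Sum>i\<in>A. \<Sum>j\<in>A. f i j) = (\<Sum>i\<in>A. f i i) + (\<Sum>(i,j)\<in>{(i,j). i\<in>A \<and> j\<in>A \<and> i<j}. f i j + f j i)"
proof -
  define Dg where "Dg = (\<lambda>i. (i,i)) ` A"
  define U where "U = {(i,j). i\<in>A \<and> j\<in>A \<and> i<j}"
  define L where "L = {(i,j). i\<in>A \<and> j\<in>A \<and> j<i}"
  have AA: "A \<times> A = Dg \<union> (U \<union> L)" unfolding Dg_def U_def L_def by auto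
  have finU: "finite U" "finite L" "finite Dg" using fin unfolding U_def L_def Dg_def
    by (auto intro: finite_subset[of _ "A \<times> A"])
  have "(\<Sum>i\<in>A. \<Sum>j\<in>A. f i j) = (\<Sum>(i,j)\<in>A \<times> A. f i j)" by (simp add: sum.cartesian_product)
  also have "\<dots> = (\<Sum>(i,j)\<in>Dg. f i j) + ((\<Sum>(i,j)\<in>U. f i j) + (\<Sum>(i,j)\<in>L. f i j))"
  proof -
    have d1: "Dg \<inter> (U \<union> L) = {}" "U \<inter> L = {}" unfolding Dg_def U_def L_def by auto
    show ?thesis unfolding AA using finU d1
      by (simp add: sum.union_disjoint)
  qed
  also have "(\<Sum>(i,j)\<in>Dg. f i j) = (\<Sum>i\<in>A. f i i)"
    unfolding Dg_def by (subst sum.reindex) (auto simp: inj_on_def)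
  also have "(\<Sum>(i,j)\<in>L. f i j) = (\<Sum>(i,j)\<in>U. f j i)"
  proof -
    have "L = prod.swap ` U" unfolding L_def U_def by auto
    thus ?thesis by (simp add: sum.reindex case_prod_beta)
  qed
  finally show ?thesis unfolding U_def by (simp add: sum.distrib case_prod_beta)
qed

lemma image_bound:
  fixes x :: "nat \<Rightarrow> 'h::chilbert \<Rightarrow> 'h"
    and y :: "nat \<Rightarrow> 'k::chilbert \<Rightarrow> 'k"
  assumes x_sa: "\<forall>i\<in>{1..m}. self_adjoint (x i) \<and> contraction (x i)"
    and y_sa: "\<forall>i\<in>{1..m}. self_adjoint (y i) \<and> contraction (y i)"
    and Q1: "tensor_norm2 u v n \<le> 1"
  shows "tensor_op_image_norm2 x y m u v n \<le>
           real m + (\<Sum>(i,j)\<in>{(i,j). i\<in>{1..m} \<and> j\<in>{1..m} \<and> i<j}. phi x y i j)"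
proof -
  define Q where "Q = Re (\<Sum>a<n. \<Sum>b<n. hinner (u a) (u b) * hinner (v a) (v b))"
  have Q: "0 \<le> Q" "Q \<le> 1" using Q1 tq_nonneg[of "{..<n}" u v] by (simp_all add: Q_def tensor_norm2_def)
  define f where "f i j = (\<Sum>a<n. \<Sum>b<n. hinner (x i (u a)) (x j (u b)) * hinner (y i (v a)) (y j (v b)))" for i j
  have bx: "bounded_op (x i)" "opnorm (x i) \<le> 1" "self_adjoint (x i)" if "i \<in> {1..m}" for i
    using x_sa that by (auto simp: contraction_def)
  have by': "bounded_op (y i)" "opnorm (y i) \<le> 1" "self_adjoint (y i)" if "i \<in> {1..m}" for i
    using y_sa that by (auto simp: contraction_def)
  have diag: "Re (f i i) \<le> 1" if i: "i \<in> {1..m}" for i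
  proof -
    have "Re (f i i) \<le> (opnorm (x i))^2 * Re (\<Sum>a<n. \<Sum>b<n. hinner (u a) (u b) * hinner (y i (v a)) (y i (v b)))"
      unfolding f_def by (rule op_left[OF bx(1)[OF i]]) simp
    also have "\<dots> \<le> (opnorm (x i))^2 * ((opnorm (y i))^2 * Q)"
      unfolding Q_def by (rule mult_left_mono[OF op_right[OF by'(1)[OF i]]]) simp_all
    also have "\<dots> \<le> 1 * (1 * 1)"
      using bx(2)[OF i] by'(2)[OF i] opnorm_facts(1)[OF bx(1)[OF i]] opnorm_facts(1)[OF by'(1)[OF i]] Q
      by (intro mult_mono power_le_one) auto
    finally show ?thesis by simp
  qed
  have off: "Re (f i j + f j i) \<le> phi x y i j" if i: "i \<in> {1..m}" and j: "j \<in> {1..m}" for i j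
  proof -
    define Mc where "Mc = (\<Sum>a<n. \<Sum>b<n. hinner (u a) (commut (x i) (x j) (u b)) * hinner (v a) (commut (y i) (y j) (v b)))"
    define Ma where "Ma = (\<Sum>a<n. \<Sum>b<n. hinner (u a) (anticommut (x i) (x j) (u b)) * hinner (v a) (anticommut (y i) (y j) (v b)))"
    have sx: "hinner (x k p) q = hinner p (x k q)" if "k \<in> {1..m}" for k p q
      using bx(3)[OF that] unfolding self_adjoint_def by blast
    have sy: "hinner (y k p) q = hinner p (y k q)" if "k \<in> {1..m}" for k p q
      using by'(3)[OF that] unfolding self_adjoint_def by blast
    have "Mc + Ma = 2 * (f i j + f j i)"
      unfolding f_def Mc_def Ma_def sx[OF i] sx[OF j] sy[OF i] sy[OF j] commut_def anticommut_def
        hinner_diff_right hinner_add_right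
      by (simp add: sum.distrib[symmetric] sum_distrib_left algebra_simps)
    hence "Re (Mc + Ma) = Re (2 * (f i j + f j i))" by (rule arg_cong)
    hence "Re (f i j + f j i) = (Re Mc + Re Ma) / 2" by simp
    also have "\<dots> \<le> (opnorm (commut (x i) (x j)) * opnorm (commut (y i) (y j)) * Q
                  + opnorm (anticommut (x i) (x j)) * opnorm (anticommut (y i) (y j)) * Q) / 2"
      unfolding Mc_def Ma_def Q_def
      by (intro divide_right_mono add_mono cross_bound bounded_comb bx(1) by'(1) i j) simp_all
    also have "\<dots> \<le> (opnorm (commut (x i) (x j)) * opnorm (commut (y i) (y j)) * 1
                  + opnorm (anticommut (x i) (x j)) * opnorm (anticommut (y i) (y j)) * 1) / 2"
      using Q
      by (intro divide_right_mono add_mono mult_left_mono mult_nonneg_nonneg opnorm_facts(1)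
          bounded_comb bx(1) by'(1) i j) simp_all
    finally show ?thesis by (simp add: phi_def)
  qed
  have "tensor_op_image_norm2 x y m u v n = Re (\<Sum>i\<in>{1..m}. \<Sum>j\<in>{1..m}. f i j)"
    unfolding tensor_op_image_norm2_def f_def ..
  also have "\<dots> = (\<Sum>i\<in>{1..m}. Re (f i i)) + (\<Sum>(i,j)\<in>{(i,j). i\<in>{1..m} \<and> j\<in>{1..m} \<and> i<j}. Re (f i j + f j i))"
    unfolding sum_square_split[OF finite_atLeastAtMost] by (simp add: case_prod_beta)
  also have "\<dots> \<le> (\<Sum>i\<in>{1..m}. 1) + (\<Sum>(i,j)\<in>{(i,j). i\<in>{1..m} \<and> j\<in>{1..m} \<and> i<j}. phi x y i j)"
    using diag off by (intro add_mono sum_mono) auto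
  finally show ?thesis by simp
qed



lemma comb:
  fixes \<phi> :: "nat \<Rightarrow> nat \<Rightarrow> real" and E :: "nat set set"
  assumes m2: "m \<ge> 2"
    and G: "simple_graph_on m E"
    and delta: "min_deg m E \<ge> 1"
    and cond: "\<forall>i\<in>{1..m}. \<forall>j\<in>{1..m}. i \<noteq> j \<and> {i, j} \<notin> E \<longrightarrow>
         \<phi> i j \<le> (1 / real (gdeg E i)) * (\<Sum>k\<in>nbrs E i. \<phi> i k)
                      + (1 / real (gdeg E j)) * (\<Sum>k\<in>nbrs E j. \<phi> j k)"
    and nn: "\<And>i j. i \<in> {1..m} \<Longrightarrow> j \<in> {1..m} \<Longrightarrow> 0 \<le> \<phi> i j"
    and sym: "\<And>i j. i \<in> {1..m} \<Longrightarrow> j \<in> {1..m} \<Longrightarrow> \<phi> i j = \<phi> j i"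
  shows "(\<Sum>(i,j)\<in>{(i,j). i\<in>{1..m} \<and> j\<in>{1..m} \<and> i<j}. \<phi> i j)
         \<le> (2 * (real m - 1) / real (min_deg m E) - 1) * (\<Sum>(i, j)\<in>edge_pairs m E. \<phi> i j)"
proof -
  define V where "V = {1..m}"
  define D where "D = {(i,j). i\<in>V \<and> j\<in>V \<and> i<j}"
  define EP where "EP = edge_pairs m E"
  define ND where "ND = D - EP"
  define \<delta> where "\<delta> = min_deg m E"
  define N where "N = nbrs E"
  define dg where "dg = gdeg E"
  define S where "S i = (\<Sum>k\<in>N i. \<phi> i k)" for i
  define A where "A i = S i / real (dg i)" for i
  have finV: "finite V" by (simp add: V_def)
  have finD: "finite D" unfolding D_def by (rule finite_subset[of _ "V \<times> V"]) (auto simp: finV)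
  have EPD: "EP \<subseteq> D" unfolding EP_def D_def V_def edge_pairs_def by auto
  have finEP: "finite EP" using finite_subset[OF EPD finD] .
  have Esub: "\<And>i j. {i, j} \<in> E \<Longrightarrow> i \<in> V \<and> j \<in> V \<and> i \<noteq> j"
  proof -
    fix i j assume "{i, j} \<in> E"
    then obtain a b where ab: "{i, j} = {a, b}" "a \<in> V" "b \<in> V" "a \<noteq> b"
      using G unfolding simple_graph_on_def V_def by blast
    thus "i \<in> V \<and> j \<in> V \<and> i \<noteq> j" by (metis doubleton_eq_iff)
  qed
  have NV: "N i \<subseteq> V - {i}" for i unfolding N_def nbrs_def using Esub by auto
  have finN: "finite (N i)" for i using finite_subset[OF NV] finV by auto
  have dgle: "\<delta> \<le> dg i" if "i \<in> V" for i
    unfolding \<delta>_def min_deg_def dg_def using that finV by (auto simp: V_def)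
  have d1: "1 \<le> \<delta>" using delta by (simp add: \<delta>_def)
  have cardV: "card V = m" by (simp add: V_def)
  have dgm: "dg i \<le> m - 1" if "i \<in> V" for i
  proof -
    have "dg i \<le> card (V - {i})" unfolding dg_def gdeg_def N_def[symmetric]
      by (rule card_mono) (use finV NV in auto)
    thus ?thesis using that cardV finV by simp
  qed
  have S0: "0 \<le> S i" if "i \<in> V" for i
    unfolding S_def
  proof (intro sum_nonneg)
    fix k assume "k \<in> N i"
    hence "k \<in> V" using NV by blast
    thus "0 \<le> \<phi> i k" using nn that by (simp add: V_def)
  qed
  have "(\<Sum>(i,j)\<in>D. \<phi> i j) = (\<Sum>(i,j)\<in>EP. \<phi> i j) + (\<Sum>(i,j)\<in>ND. \<phi> i j)"
    unfolding ND_def using finD EPD by (simp add: sum.subset_diff)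
  also have "(\<Sum>(i,j)\<in>ND. \<phi> i j) \<le> (\<Sum>(i,j)\<in>ND. A i + A j)"
  proof (intro sum_mono)
    fix p assume "p \<in> ND"
    then obtain i j where p: "p = (i,j)" "i \<in> V" "j \<in> V" "i < j" "(i,j) \<notin> EP"
      unfolding ND_def D_def by auto
    hence "{i,j} \<notin> E" unfolding EP_def edge_pairs_def V_def by auto
    with cond p show "(case p of (i, j) \<Rightarrow> \<phi> i j) \<le> (case p of (i, j) \<Rightarrow> A i + A j)"
      unfolding A_def S_def N_def dg_def V_def by auto
  qed
  also have "(\<Sum>(i,j)\<in>ND. A i + A j) = (\<Sum>i\<in>V. A i * real (card {j\<in>V. j \<noteq> i \<and> {i,j} \<notin> E}))"
  proof -
    define ND' where "ND' = prod.swap ` ND"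
    define Om where "Om = Sigma V (\<lambda>i. {j\<in>V. j \<noteq> i \<and> {i,j} \<notin> E})"
    have finND: "finite ND" using finD by (simp add: ND_def)
    have finND': "finite ND'" using finND by (simp add: ND'_def)
    have ND_eq: "ND = {(i,j). i\<in>V \<and> j\<in>V \<and> i<j \<and> {i,j} \<notin> E}"
      unfolding ND_def D_def EP_def edge_pairs_def V_def by auto
    have ND'_eq: "ND' = {(i,j). i\<in>V \<and> j\<in>V \<and> j<i \<and> {i,j} \<notin> E}"
      unfolding ND'_def ND_eq by (auto simp: insert_commute image_iff)
    have Om_eq: "Om = ND \<union> ND'" unfolding Om_def ND_eq ND'_eq by auto
    have disj: "ND \<inter> ND' = {}" unfolding ND_eq ND'_eq by auto
    have "(\<Sum>(i,j)\<in>ND. A i + A j) = (\<Sum>(i,j)\<in>ND. A i) + (\<Sum>(i,j)\<in>ND. A j)"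
      by (simp add: sum.distrib case_prod_beta)
    also have "(\<Sum>(i,j)\<in>ND. A j) = (\<Sum>(i,j)\<in>ND'. A i)"
      unfolding ND'_def by (simp add: sum.reindex case_prod_beta)
    also have "(\<Sum>(i,j)\<in>ND. A i) + (\<Sum>(i,j)\<in>ND'. A i) = (\<Sum>(i,j)\<in>Om. A i)"
      unfolding Om_eq using finND finND' disj by (simp add: sum.union_disjoint)
    also have "\<dots> = (\<Sum>i\<in>V. \<Sum>j\<in>{j\<in>V. j \<noteq> i \<and> {i,j} \<notin> E}. A i)"
      unfolding Om_def using finV by (subst sum.Sigma) auto
    finally show ?thesis by (simp add: mult.commute)
  qed
  also have "\<dots> \<le> (\<Sum>i\<in>V. S i * ((real m - 1 - real \<delta>) / real \<delta>))"
  proof (intro sum_mono)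
    fix i assume i: "i \<in> V"
    have "{j\<in>V. j \<noteq> i \<and> {i,j} \<notin> E} = (V - {i}) - N i" unfolding N_def nbrs_def by auto
    hence "card {j\<in>V. j \<noteq> i \<and> {i,j} \<notin> E} = card (V - {i}) - card (N i)"
      using NV finN by (simp add: card_Diff_subset)
    also have "\<dots> = (m - 1) - dg i" using i finV cardV by (simp add: dg_def gdeg_def N_def)
    finally have c: "real (card {j\<in>V. j \<noteq> i \<and> {i,j} \<notin> E}) = real m - 1 - real (dg i)"
      using dgm[OF i] m2 by (simp add: of_nat_diff)
    have dpos: "real \<delta> \<ge> 1" "real (dg i) \<ge> real \<delta>" using d1 dgle[OF i] by auto
    have "(real m - 1 - real (dg i)) / real (dg i) \<le> (real m - 1 - real \<delta>) / real \<delta>"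
    proof -
      have "(real m - 1) / real (dg i) \<le> (real m - 1) / real \<delta>"
        using dpos m2 by (intro divide_left_mono) auto
      thus ?thesis using dpos by (simp add: diff_divide_distrib)
    qed
    hence "S i * ((real m - 1 - real (dg i)) / real (dg i)) \<le> S i * ((real m - 1 - real \<delta>) / real \<delta>)"
      using S0[OF i] by (rule mult_left_mono)
    thus "A i * real (card {j\<in>V. j \<noteq> i \<and> {i,j} \<notin> E}) \<le> S i * ((real m - 1 - real \<delta>) / real \<delta>)"
      unfolding c A_def by simp
  qed
  also have "(\<Sum>i\<in>V. S i * ((real m - 1 - real \<delta>) / real \<delta>)) = (\<Sum>i\<in>V. S i) * ((real m - 1 - real \<delta>) / real \<delta>)"
    by (rule sum_distrib_right[symmetric])
  also have "(\<Sum>i\<in>V. S i) = 2 * (\<Sum>(i,j)\<in>EP. \<phi> i j)"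
  proof -
    define OE where "OE = Sigma V N"
    have OE_eq: "OE = EP \<union> prod.swap ` EP"
    proof (intro set_eqI iffI)
      fix p assume "p \<in> OE"
      then obtain i k where p: "p = (i,k)" "{i,k} \<in> E" unfolding OE_def N_def nbrs_def by auto
      with Esub have ik: "i \<in> V" "k \<in> V" "i \<noteq> k" by auto
      show "p \<in> EP \<union> prod.swap ` EP"
      proof (cases "i < k")
        case True thus ?thesis using p ik unfolding EP_def edge_pairs_def V_def by auto
      next
        case False hence "k < i" using ik by simp
        hence "(k,i) \<in> EP" using p ik unfolding EP_def edge_pairs_def V_def by (auto simp: insert_commute)
        hence "prod.swap (k,i) \<in> prod.swap ` EP" by (rule imageI)
        thus ?thesis using p by simp
      qed
    next
      fix p assume "p \<in> EP \<union> prod.swap ` EP"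
      thus "p \<in> OE" unfolding OE_def EP_def edge_pairs_def N_def nbrs_def V_def
        by (auto simp: insert_commute)
    qed
    have disj: "EP \<inter> prod.swap ` EP = {}" unfolding EP_def edge_pairs_def by auto
    have "(\<Sum>i\<in>V. S i) = (\<Sum>(i,k)\<in>OE. \<phi> i k)"
      unfolding S_def OE_def using finV finN by (subst sum.Sigma) auto
    also have "\<dots> = (\<Sum>(i,k)\<in>EP. \<phi> i k) + (\<Sum>(i,k)\<in>prod.swap ` EP. \<phi> i k)"
      unfolding OE_eq using finEP disj by (simp add: sum.union_disjoint)
    also have "(\<Sum>(i,k)\<in>prod.swap ` EP. \<phi> i k) = (\<Sum>(i,k)\<in>EP. \<phi> k i)"
      by (simp add: sum.reindex case_prod_beta)
    also have "\<dots> = (\<Sum>(i,k)\<in>EP. \<phi> i k)"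
      using EPD by (intro sum.cong refl) (auto simp: D_def V_def sym)
    finally show ?thesis by simp
  qed
  finally have "(\<Sum>(i,j)\<in>D. \<phi> i j) \<le> (\<Sum>(i,j)\<in>EP. \<phi> i j)
      + 2 * (\<Sum>(i,j)\<in>EP. \<phi> i j) * ((real m - 1 - real \<delta>) / real \<delta>)" by simp
  also have "\<dots> = (2 * (real m - 1) / real \<delta> - 1) * (\<Sum>(i,j)\<in>EP. \<phi> i j)"
    using d1 by (simp add: field_simps)
  finally show ?thesis unfolding D_def V_def EP_def \<delta>_def .
qed



theorem theorem2p2:
  fixes x :: "nat \<Rightarrow> 'h::chilbert \<Rightarrow> 'h"
    and y :: "nat \<Rightarrow> 'k::chilbert \<Rightarrow> 'k"
    and m :: nat
    and E :: "nat set set"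
  assumes m2: "m \<ge> 2"
    and x_sa: "\<forall>i\<in>{1..m}. self_adjoint (x i) \<and> contraction (x i)"
    and y_sa: "\<forall>i\<in>{1..m}. self_adjoint (y i) \<and> contraction (y i)"
    and G: "simple_graph_on m E"
    and delta: "min_deg m E \<ge> 1"
    and cond: "\<forall>i\<in>{1..m}. \<forall>j\<in>{1..m}. i \<noteq> j \<and> {i, j} \<notin> E \<longrightarrow>
         phi x y i j \<le> (1 / real (gdeg E i)) * (\<Sum>k\<in>nbrs E i. phi x y i k)
                      + (1 / real (gdeg E j)) * (\<Sum>k\<in>nbrs E j. phi x y j k)"
  shows "(tensor_sum_opnorm x y m)\<^sup>2 \<le>
           real m + (2 * (real m - 1) / real (min_deg m E) - 1) * (\<Sum>(i, j)\<in>edge_pairs m E. phi x y i j)"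
proof -
  define R where "R = real m + (2 * (real m - 1) / real (min_deg m E) - 1) * (\<Sum>(i, j)\<in>edge_pairs m E. phi x y i j)"
  have bx: "bounded_op (x i)" if "i \<in> {1..m}" for i using x_sa that by (auto simp: contraction_def)
  have by': "bounded_op (y i)" if "i \<in> {1..m}" for i using y_sa that by (auto simp: contraction_def)
  have nn: "0 \<le> phi x y i j" if "i \<in> {1..m}" "j \<in> {1..m}" for i j
    unfolding phi_def using that
    by (intro mult_nonneg_nonneg add_nonneg_nonneg opnorm_facts(1) bounded_comb bx by') simp_all
  have sym: "phi x y i j = phi x y j i" if "i \<in> {1..m}" "j \<in> {1..m}" for i j
  proof -
    have c1: "opnorm (commut (x j) (x i)) = opnorm (commut (x i) (x j))"
      by (rule opnorm_neg_eq) (simp add: commut_def)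
    have c2: "opnorm (commut (y j) (y i)) = opnorm (commut (y i) (y j))"
      by (rule opnorm_neg_eq) (simp add: commut_def)
    have a1: "anticommut (x j) (x i) = anticommut (x i) (x j)"
      by (simp add: anticommut_def add.commute)
    have a2: "anticommut (y j) (y i) = anticommut (y i) (y j)"
      by (simp add: anticommut_def add.commute)
    show ?thesis unfolding phi_def c1 c2 a1 a2 ..
  qed
  have bound: "t \<le> R" if "t \<in> {tensor_op_image_norm2 x y m u v n | u v n. tensor_norm2 u v n \<le> 1}" for t
  proof -
    from that obtain u v n where t: "t = tensor_op_image_norm2 x y m u v n" and q: "tensor_norm2 u v n \<le> 1"
      by blast
    have "t \<le> real m + (\<Sum>(i,j)\<in>{(i,j). i\<in>{1..m} \<and> j\<in>{1..m} \<and> i<j}. phi x y i j)"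
      unfolding t by (rule image_bound[OF x_sa y_sa q])
    also have "\<dots> \<le> R" unfolding R_def
      using comb[OF m2 G delta cond nn sym] by simp
    finally show ?thesis .
  qed
  define Z where "Z = {sqrt (tensor_op_image_norm2 x y m u v n) | u v n. tensor_norm2 u v n \<le> 1}"
  define u0 :: "nat \<Rightarrow> 'h" where "u0 = (\<lambda>_. 0)"
  define v0 :: "nat \<Rightarrow> 'k" where "v0 = (\<lambda>_. 0)"
  have z0: "sqrt (tensor_op_image_norm2 x y m u0 v0 0) \<in> Z" unfolding Z_def
    by (rule CollectI, rule exI[of _ u0], rule exI[of _ v0], rule exI[of _ 0]) (simp add: tensor_norm2_def)
  have t00: "tensor_op_image_norm2 x y m u0 v0 0 = 0" by (simp add: tensor_op_image_norm2_def)
  have "tensor_op_image_norm2 x y m u0 v0 0 \<le> R"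
    by (rule bound, rule CollectI, rule exI[of _ u0], rule exI[of _ v0], rule exI[of _ 0]) (simp add: tensor_norm2_def)
  hence R0: "0 \<le> R" using t00 by simp
  have zb: "z \<le> sqrt R" if "z \<in> Z" for z
  proof -
    from that obtain u v n where z: "z = sqrt (tensor_op_image_norm2 x y m u v n)" and q: "tensor_norm2 u v n \<le> 1"
      unfolding Z_def by blast
    have "tensor_op_image_norm2 x y m u v n \<le> R" by (rule bound) (use q in blast)
    thus ?thesis unfolding z by (rule real_sqrt_le_mono)
  qed
  have bdd: "bdd_above Z" using zb by (intro bdd_aboveI[of _ "sqrt R"]) blast
  have "tensor_sum_opnorm x y m \<le> sqrt R"
    unfolding tensor_sum_opnorm_def Z_def[symmetric] using z0 zb by (intro cSup_least) auto
  moreover have "0 \<le> tensor_sum_opnorm x y m"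
    unfolding tensor_sum_opnorm_def Z_def[symmetric] using cSup_upper[OF z0 bdd] t00 by simp
  ultimately have "(tensor_sum_opnorm x y m)^2 \<le> (sqrt R)^2" by (intro power_mono)
  thus ?thesis using R0 by (simp add: R_def)
qed

end
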